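(* Let $n\ge1$ and let $\Gamma$ be a finite undirected graph on exactly $n$ vertices, without loops but possibly with multiple edges, together with an edge colouring $c:E(\Gamma)\to\{\text{magenta},\text{yellow},\text{cyan}\}$ that is injective on the set of edges joining any given pair of distinct vertices. Then $\Sigma(\Gamma)\le n$, with equality if and only if every cycle of $\Gamma$ is monochromatic (different cycles may have different colours).
   Context: Let $\Gamma_{my}$ (resp. $\Gamma_{yc}$, $\Gamma_{mc}$) be the spanning subgraph of $\Gamma$ with all vertices of $\Gamma$ and only the magenta and yellow (resp. yellow and cyan, magenta and cyan) edges. For a connected component $C$ of $\Gamma$ and colours $\in\{my,yc,mc\}$, let $\operatorname{val}_{colors}(C)$ be the number of connected components of $C\cap\Gamma_{colors}$. Define \[\Sigma(\Gamma)=\sum_{C}\big(\operatorname{val}_{my}(C)+\operatorname{val}_{yc}(C)+\operatorname{val}_{mc}(C)-2\big),\] the sum over all connected components $C$ of $\Gamma$. A cycle is a closed path $x_0e_0x_1e_1\dots x_ke_kx_0$ with pairwise distinct vertices $x_i$ and edges $e_i$ joining consecutive vertices; it is monochromatic if all its edges have the same colour. *)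

theory Defs
  imports Main
begin

datatype colour = Magenta | Yellow | Cyan

definition coloured_multigraph ::
  "'a set \<Rightarrow> 'e set \<Rightarrow> ('e \<Rightarrow> 'a set) \<Rightarrow> ('e \<Rightarrow> colour) \<Rightarrow> bool" where
  "coloured_multigraph V E ends col \<longleftrightarrow>
     finite V \<and> finite E \<and>
     (\<forall>e\<in>E. ends e \<subseteq> V \<and> card (ends e) = 2) \<and>
     (\<forall>e\<in>E. \<forall>e'\<in>E. ends e = ends e' \<and> col e = col e' \<longrightarrow> e = e')"

definition adj_rel :: "'a set \<Rightarrow> 'e set \<Rightarrow> ('e \<Rightarrow> 'a set) \<Rightarrow> ('a \<times> 'a) set" where
  "adj_rel W F ends = {(x, y). x \<in> W \<and> y \<in> W \<and> (\<exists>e\<in>F. ends e = {x, y})}"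

definition components :: "'a set \<Rightarrow> 'e set \<Rightarrow> ('e \<Rightarrow> 'a set) \<Rightarrow> 'a set set" where
  "components W F ends = {{y \<in> W. (x, y) \<in> (adj_rel W F ends)\<^sup>*} | x. x \<in> W}"

definition val :: "'e set \<Rightarrow> ('e \<Rightarrow> 'a set) \<Rightarrow> ('e \<Rightarrow> colour) \<Rightarrow> colour set \<Rightarrow> 'a set \<Rightarrow> nat" where
  "val E ends col S C = card (components C {e \<in> E. col e \<in> S \<and> ends e \<subseteq> C} ends)"

definition Sigma_graph :: "'a set \<Rightarrow> 'e set \<Rightarrow> ('e \<Rightarrow> 'a set) \<Rightarrow> ('e \<Rightarrow> colour) \<Rightarrow> int" where
  "Sigma_graph V E ends col =
     (\<Sum>C\<in>components V E ends.
        int (val E ends col {Magenta, Yellow} C) + int (val E ends col {Yellow, Cyan} C)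
        + int (val E ends col {Magenta, Cyan} C) - 2)"

definition is_cycle :: "'a set \<Rightarrow> 'e set \<Rightarrow> ('e \<Rightarrow> 'a set) \<Rightarrow> 'a list \<Rightarrow> 'e list \<Rightarrow> bool" where
  "is_cycle V E ends xs es \<longleftrightarrow>
     length xs = length es \<and> xs \<noteq> [] \<and> distinct xs \<and> distinct es \<and>
     set xs \<subseteq> V \<and> set es \<subseteq> E \<and>
     (\<forall>i < length es. ends (es ! i) = {xs ! i, xs ! ((i + 1) mod length xs)})"

definition monochromatic :: "('e \<Rightarrow> colour) \<Rightarrow> 'e list \<Rightarrow> bool" where
  "monochromatic col es \<longleftrightarrow> (\<forall>e\<in>set es. \<forall>e'\<in>set es. col e = col e')"

end

theory Submission
  imports Defs
begin

definition cls :: "'a set \<Rightarrow> 'e set \<Rightarrow> ('e \<Rightarrow> 'a set) \<Rightarrow> 'a \<Rightarrow> 'a set" where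
  "cls W F ends x = {y\<in>W. (x,y) \<in> (adj_rel W F ends)\<^sup>*}"

lemma comps_eq: "components W F ends = cls W F ends ` W"
  unfolding components_def cls_def by blast

lemma adj_sym: "(x,y) \<in> adj_rel W F ends \<Longrightarrow> (y,x) \<in> adj_rel W F ends"
  unfolding adj_rel_def by (auto simp: insert_commute)

lemma adj_W: "(x,y) \<in> adj_rel W F ends \<Longrightarrow> x \<in> W \<and> y \<in> W"
  unfolding adj_rel_def by auto

lemma conn_sym: "(x,y) \<in> (adj_rel W F ends)\<^sup>* \<Longrightarrow> (y,x) \<in> (adj_rel W F ends)\<^sup>*"
proof (induction rule: rtrancl_induct)
  case base then show ?case by simp
next
  case (step y z) then show ?case
    by (meson adj_sym converse_rtrancl_into_rtrancl)
qed

lemma conn_W: "(x,y) \<in> (adj_rel W F ends)\<^sup>* \<Longrightarrow> x \<in> W \<Longrightarrow> y \<in> W"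
  by (induction rule: rtrancl_induct) (auto dest: adj_W)

lemma adj_mono: "W \<subseteq> W' \<Longrightarrow> F \<subseteq> F' \<Longrightarrow> adj_rel W F ends \<subseteq> adj_rel W' F' ends"
  unfolding adj_rel_def by blast

lemma conn_mono: "W \<subseteq> W' \<Longrightarrow> F \<subseteq> F' \<Longrightarrow> (x,y) \<in> (adj_rel W F ends)\<^sup>* \<Longrightarrow> (x,y) \<in> (adj_rel W' F' ends)\<^sup>*"
proof -
  assume a: "W \<subseteq> W'" "F \<subseteq> F'" "(x,y) \<in> (adj_rel W F ends)\<^sup>*"
  have "(adj_rel W F ends)\<^sup>* \<subseteq> (adj_rel W' F' ends)\<^sup>*"
    by (rule rtrancl_mono, rule adj_mono[OF a(1,2)])
  then show ?thesis using a(3) by (rule subsetD)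
qed

lemma cls_self: "x \<in> W \<Longrightarrow> x \<in> cls W F ends x"
  unfolding cls_def by simp

lemma cls_eq: assumes "x \<in> W" "z \<in> cls W F ends x" shows "cls W F ends z = cls W F ends x"
proof -
  have xz1: "(x,z) \<in> (adj_rel W F ends)\<^sup>*" using assms(2) unfolding cls_def by simp
  have xz: "(x,z) \<in> (adj_rel W F ends)\<^sup>*" "(z,x) \<in> (adj_rel W F ends)\<^sup>*"
    using xz1 conn_sym[OF xz1] by auto
  show ?thesis unfolding cls_def using xz rtrancl_trans[of _ _ "adj_rel W F ends"] by blast
qed

lemma cls_sub: "cls W F ends x \<subseteq> W" unfolding cls_def by auto

lemma finite_comps: "finite W \<Longrightarrow> finite (components W F ends)"
  by (simp add: comps_eq)

lemma kk_empty: "card (components W {} ends) = card W"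
proof -
  have "adj_rel W {} ends = {}" unfolding adj_rel_def by auto
  then have "cls W {} ends x = W \<inter> {x}" for x unfolding cls_def by auto
  then have "components W {} ends = (\<lambda>x. {x}) ` W" by (auto simp: comps_eq)
  then show ?thesis by (simp add: card_image)
qed

lemma adj_insert:
  assumes "ends e = {u,v}" "u \<in> W" "v \<in> W"
  shows "adj_rel W (insert e F) ends = adj_rel W F ends \<union> {(u,v),(v,u)}"
  using assms unfolding adj_rel_def by (auto simp: doubleton_eq_iff)

lemma kk_insert:
  assumes fin: "finite W" and e: "ends e = {u,v}" "u \<in> W" "v \<in> W"
  shows "int (card (components W (insert e F) ends)) =
     int (card (components W F ends)) - (if (u,v) \<in> (adj_rel W F ends)\<^sup>* then 0 else 1)"
proof (cases "(u,v) \<in> (adj_rel W F ends)\<^sup>*")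
  case True
  let ?R = "adj_rel W F ends"
  have vu: "(v,u) \<in> ?R\<^sup>*" using conn_sym[OF True] .
  have "(adj_rel W (insert e F) ends)\<^sup>* = ?R\<^sup>*"
    unfolding adj_insert[of ends e u v W F, OF e]
    by (rule rtrancl_subset) (use True vu in auto)
  then have "components W (insert e F) ends = components W F ends"
    unfolding components_def by simp
  then show ?thesis using True by simp
next
  case False
  let ?R = "adj_rel W F ends"
  let ?R' = "adj_rel W (insert e F) ends"
  have symR: "(a,b) \<in> ?R\<^sup>* \<longleftrightarrow> (b,a) \<in> ?R\<^sup>*" for a b using conn_sym by metis
  have trR: "(a,b) \<in> ?R\<^sup>* \<Longrightarrow> (b,c) \<in> ?R\<^sup>* \<Longrightarrow> (a,c) \<in> ?R\<^sup>*" for a b c by (rule rtrancl_trans)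
  define A where "A = cls W F ends u"
  define B where "B = cls W F ends v"
  have Aiff: "y \<in> A \<longleftrightarrow> y \<in> W \<and> (u,y) \<in> ?R\<^sup>*" for y unfolding A_def cls_def by simp
  have Biff: "y \<in> B \<longleftrightarrow> y \<in> W \<and> (v,y) \<in> ?R\<^sup>*" for y unfolding B_def cls_def by simp
  have char: "(x,y) \<in> ?R'\<^sup>* \<Longrightarrow> (x,y) \<in> ?R\<^sup>* \<or> ((x,u) \<in> ?R\<^sup>* \<and> (v,y) \<in> ?R\<^sup>*) \<or> ((x,v) \<in> ?R\<^sup>* \<and> (u,y) \<in> ?R\<^sup>*)" for x y
  proof (induction rule: rtrancl_induct)
    case base then show ?case by simp
  next
    case (step y z)
    from step(2) have "(y,z) \<in> ?R \<or> (y,z) = (u,v) \<or> (y,z) = (v,u)"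
      unfolding adj_insert[of ends e u v W F, OF e] by auto
    then show ?case
    proof (elim disjE)
      assume "(y,z) \<in> ?R" then show ?thesis using step(3)
        by (meson rtrancl.rtrancl_into_rtrancl)
    next
      assume "(y,z) = (u,v)" then show ?thesis using step(3) trR[of x v u] symR[of u v] by auto
    next
      assume "(y,z) = (v,u)" then show ?thesis using step(3) trR[of x u v] symR[of u v] by auto
    qed
  qed
  have bkw: "(x,y) \<in> ?R\<^sup>* \<Longrightarrow> (x,y) \<in> ?R'\<^sup>*" for x y
    by (rule conn_mono[of W W F "insert e F"]) auto
  have uv: "(u,v) \<in> ?R'\<^sup>*" "(v,u) \<in> ?R'\<^sup>*" unfolding adj_insert[of ends e u v W F, OF e] by auto
  have trR': "(a,b) \<in> ?R'\<^sup>* \<Longrightarrow> (b,c) \<in> ?R'\<^sup>* \<Longrightarrow> (a,c) \<in> ?R'\<^sup>*" for a b c by (rule rtrancl_trans)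
  have c1: "cls W (insert e F) ends x = A \<union> B" if "x \<in> A \<union> B" for x
  proof -
    have xu: "(x,u) \<in> ?R'\<^sup>*" "(x,v) \<in> ?R'\<^sup>*"
    proof -
      show "(x,u) \<in> ?R'\<^sup>*"
      proof (cases "x \<in> A")
        case True then show ?thesis using Aiff symR bkw by blast
      next
        case False then have "(v,x) \<in> ?R\<^sup>*" using that Biff by blast
        then show ?thesis using symR bkw trR'[OF _ uv(2)] by blast
      qed
      show "(x,v) \<in> ?R'\<^sup>*"
      proof (cases "x \<in> B")
        case True then show ?thesis using Biff symR bkw by blast
      next
        case False then have "(u,x) \<in> ?R\<^sup>*" using that Aiff by blast
        then show ?thesis using symR bkw trR'[OF _ uv(1)] by blast
      qed
    qed
    show ?thesis
    proof
      show "cls W (insert e F) ends x \<subseteq> A \<union> B"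
      proof
        fix y assume "y \<in> cls W (insert e F) ends x"
        then have y: "y \<in> W" "(x,y) \<in> ?R'\<^sup>*" unfolding cls_def by auto
        have xx: "(u,x) \<in> ?R\<^sup>* \<or> (v,x) \<in> ?R\<^sup>*" using that Aiff Biff by blast
        from char[OF y(2)] show "y \<in> A \<union> B"
        proof (elim disjE conjE)
          assume "(x,y) \<in> ?R\<^sup>*" then show ?thesis using xx trR y(1) Aiff Biff by blast
        next
          assume "(v,y) \<in> ?R\<^sup>*" then show ?thesis using y(1) Biff by blast
        next
          assume "(u,y) \<in> ?R\<^sup>*" then show ?thesis using y(1) Aiff by blast
        qed
      qed
    next
      show "A \<union> B \<subseteq> cls W (insert e F) ends x"
      proof
        fix y assume "y \<in> A \<union> B"
        then have "y \<in> W" "(u,y) \<in> ?R'\<^sup>* \<or> (v,y) \<in> ?R'\<^sup>*" using Aiff Biff bkw by blast+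
        then show "y \<in> cls W (insert e F) ends x" unfolding cls_def using xu trR' by blast
      qed
    qed
  qed
  have c2: "cls W (insert e F) ends x = cls W F ends x" if "x \<in> W" "x \<notin> A \<union> B" for x
  proof -
    have nx: "(x,u) \<notin> ?R\<^sup>*" "(x,v) \<notin> ?R\<^sup>*" using that symR Aiff Biff by blast+
    have "(x,y) \<in> ?R'\<^sup>* \<longleftrightarrow> (x,y) \<in> ?R\<^sup>*" for y using char[of x y] nx bkw[of x y] by blast
    then show ?thesis unfolding cls_def by simp
  qed
  define X where "X = cls W F ends ` (W - (A \<union> B))"
  have uA: "u \<in> A" and vB: "v \<in> B" using e cls_self A_def B_def by auto
  have AB: "A \<noteq> B" using False uA Biff symR by blast
  have notX: "A \<notin> X" "B \<notin> X" "A \<union> B \<notin> X"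
  proof -
    have h: "D \<notin> X" if "D \<subseteq> A \<union> B" for D
    proof
      assume "D \<in> X"
      then obtain x where x: "x \<in> W - (A \<union> B)" "D = cls W F ends x" unfolding X_def by (rule imageE)
      then have "x \<in> D" using cls_self[of x W F ends] by simp
      then show False using x that by blast
    qed
    show "A \<notin> X" by (rule h) simp
    show "B \<notin> X" by (rule h) simp
    show "A \<union> B \<notin> X" by (rule h) simp
  qed
  have "components W F ends = insert A (insert B X)"
  proof -
    have "cls W F ends x \<in> insert A (insert B X)" if "x \<in> W" for x
    proof (cases "x \<in> A \<union> B")
      case True
      then have "cls W F ends x = A \<or> cls W F ends x = B"
        using cls_eq[of u W x F ends] cls_eq[of v W x F ends] e A_def B_def by blast
      then show ?thesis by blast
    next
      case False then show ?thesis using that X_def by blast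
    qed
    moreover have "A \<in> cls W F ends ` W" "B \<in> cls W F ends ` W" using e A_def B_def by auto
    moreover have "X \<subseteq> cls W F ends ` W" unfolding X_def by blast
    ultimately show ?thesis unfolding comps_eq by blast
  qed
  moreover have "components W (insert e F) ends = insert (A \<union> B) X"
  proof -
    have "cls W (insert e F) ends x \<in> insert (A \<union> B) X" if "x \<in> W" for x
    proof (cases "x \<in> A \<union> B")
      case True then show ?thesis using c1 by blast
    next
      case False then show ?thesis using c2 that X_def by auto
    qed
    moreover have "A \<union> B \<in> cls W (insert e F) ends ` W" using c1 uA e(2) by (metis UnI1 image_eqI)
    moreover have "X \<subseteq> cls W (insert e F) ends ` W"
    proof
      fix D assume "D \<in> X"
      then obtain x where x: "x \<in> W - (A \<union> B)" "D = cls W F ends x" unfolding X_def by (rule imageE)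
      then show "D \<in> cls W (insert e F) ends ` W" using c2[of x] by auto
    qed
    ultimately show ?thesis unfolding comps_eq by blast
  qed
  moreover have "finite X" unfolding X_def using fin by simp
  ultimately show ?thesis using False notX AB by simp
qed

lemma comps_restrict:
  assumes FG: "F \<subseteq> G" and C: "C \<in> components W G ends"
  shows "components C {e\<in>F. ends e \<subseteq> C} ends = {D \<in> components W F ends. D \<subseteq> C}"
proof -
  obtain x0 where x0: "x0 \<in> W" "C = cls W G ends x0" using C unfolding comps_eq by (rule imageE)
  have CW: "C \<subseteq> W" using x0 cls_sub by metis
  have closed: "z \<in> C" if "y \<in> C" "(y,z) \<in> adj_rel W G ends" for y z
  proof -
    have "(x0,y) \<in> (adj_rel W G ends)\<^sup>*" using that(1) x0(2) unfolding cls_def by simp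
    then have "(x0,z) \<in> (adj_rel W G ends)\<^sup>*" using that(2) by (rule rtrancl_into_rtrancl)
    moreover have "z \<in> W" using adj_W[OF that(2)] by simp
    ultimately show ?thesis using x0(2) unfolding cls_def by simp
  qed
  let ?FC = "{e\<in>F. ends e \<subseteq> C}"
  have key: "(x,y) \<in> (adj_rel W F ends)\<^sup>* \<Longrightarrow> x \<in> C \<Longrightarrow> y \<in> C \<and> (x,y) \<in> (adj_rel C ?FC ends)\<^sup>*" for x y
  proof (induction rule: rtrancl_induct)
    case base then show ?case by simp
  next
    case (step y z)
    then have yC: "y \<in> C" and yc: "(x,y) \<in> (adj_rel C ?FC ends)\<^sup>*" by auto
    have "(y,z) \<in> adj_rel W G ends" using step(2) adj_mono[of W W F G ends] FG by blast
    then have zC: "z \<in> C" using closed yC by blast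
    from step(2) obtain e where e: "e \<in> F" "ends e = {y,z}" unfolding adj_rel_def by blast
    then have "e \<in> ?FC" using yC zC by simp
    then have "(y,z) \<in> adj_rel C ?FC ends" using yC zC e(2) unfolding adj_rel_def by blast
    then show ?case using zC yc by simp
  qed
  have clseq: "cls C ?FC ends x = cls W F ends x" if "x \<in> C" for x
  proof
    show "cls C ?FC ends x \<subseteq> cls W F ends x"
      unfolding cls_def using conn_mono[of C W ?FC F x _ ends] CW by auto
    show "cls W F ends x \<subseteq> cls C ?FC ends x"
      unfolding cls_def using key that by auto
  qed
  have clsC: "cls W F ends x \<subseteq> C" if "x \<in> C" for x
    using clseq[OF that] cls_sub[of C ?FC ends x] by simp
  have "components C ?FC ends = cls W F ends ` C"
    unfolding comps_eq using clseq by simp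
  also have "\<dots> = {D \<in> components W F ends. D \<subseteq> C}"
  proof
    show "cls W F ends ` C \<subseteq> {D \<in> components W F ends. D \<subseteq> C}"
      unfolding comps_eq using clsC CW by auto
    show "{D \<in> components W F ends. D \<subseteq> C} \<subseteq> cls W F ends ` C"
    proof
      fix D assume "D \<in> {D \<in> components W F ends. D \<subseteq> C}"
      then obtain x where x: "x \<in> W" "D = cls W F ends x" "D \<subseteq> C" unfolding comps_eq by auto
      then have "x \<in> C" using cls_self[of x W F ends] by auto
      then show "D \<in> cls W F ends ` C" using x by simp
    qed
  qed
  finally show ?thesis .
qed

lemma sum_restrict:
  assumes fin: "finite W" and FG: "F \<subseteq> G"
  shows "(\<Sum>C\<in>components W G ends. card {D\<in>components W F ends. D \<subseteq> C}) = card (components W F ends)"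
proof -
  let ?A = "\<lambda>C. {D\<in>components W F ends. D \<subseteq> C}"
  have "card (\<Union>C\<in>components W G ends. ?A C) = (\<Sum>C\<in>components W G ends. card (?A C))"
  proof (rule card_UN_disjoint)
    show "finite (components W G ends)" using fin by (rule finite_comps)
    show "\<forall>C\<in>components W G ends. finite (?A C)" using finite_comps[OF fin, of F ends] by simp
    show "\<forall>C1\<in>components W G ends. \<forall>C2\<in>components W G ends. C1 \<noteq> C2 \<longrightarrow> ?A C1 \<inter> ?A C2 = {}"
    proof (intro ballI impI)
      fix C1 C2 assume C1: "C1 \<in> components W G ends" and C2: "C2 \<in> components W G ends" and ne: "C1 \<noteq> C2"
      show "?A C1 \<inter> ?A C2 = {}"
      proof (rule ccontr)
        assume "?A C1 \<inter> ?A C2 \<noteq> {}"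
        then obtain D where D: "D \<in> components W F ends" "D \<subseteq> C1" "D \<subseteq> C2" by blast
        obtain x where x: "x \<in> W" "D = cls W F ends x" using D(1) unfolding comps_eq by (rule imageE)
        then have "x \<in> C1" "x \<in> C2" using D cls_self[of x W F ends] by auto
        obtain y1 where y1: "y1 \<in> W" "C1 = cls W G ends y1" using C1 unfolding comps_eq by (rule imageE)
        obtain y2 where y2: "y2 \<in> W" "C2 = cls W G ends y2" using C2 unfolding comps_eq by (rule imageE)
        have "cls W G ends x = C1" using cls_eq[of y1 W x G ends] y1 \<open>x \<in> C1\<close> by simp
        moreover have "cls W G ends x = C2" using cls_eq[of y2 W x G ends] y2 \<open>x \<in> C2\<close> by simp
        ultimately show False using ne by simp
      qed
    qed
  qed
  moreover have "(\<Union>C\<in>components W G ends. ?A C) = components W F ends"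
  proof
    show "(\<Union>C\<in>components W G ends. ?A C) \<subseteq> components W F ends" by blast
    show "components W F ends \<subseteq> (\<Union>C\<in>components W G ends. ?A C)"
    proof
      fix D assume D: "D \<in> components W F ends"
      then obtain x where x: "x \<in> W" "D = cls W F ends x" unfolding comps_eq by (rule imageE)
      have "cls W G ends x \<in> components W G ends" using x(1) unfolding comps_eq by simp
      moreover have "D \<subseteq> cls W G ends x"
        unfolding x(2) cls_def using conn_mono[of W W F G x _ ends] FG by auto
      ultimately show "D \<in> (\<Union>C\<in>components W G ends. ?A C)" using D by blast
    qed
  qed
  ultimately show ?thesis by simp
qed

definition Sub :: "'e set \<Rightarrow> ('e \<Rightarrow> colour) \<Rightarrow> colour set \<Rightarrow> 'e set" where
  "Sub E col S = {e\<in>E. col e \<in> S}"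

definition kk :: "'a set \<Rightarrow> 'e set \<Rightarrow> ('e \<Rightarrow> 'a set) \<Rightarrow> int" where
  "kk W F ends = int (card (components W F ends))"

definition Phi :: "'a set \<Rightarrow> 'e set \<Rightarrow> ('e \<Rightarrow> 'a set) \<Rightarrow> ('e \<Rightarrow> colour) \<Rightarrow> int" where
  "Phi V E ends col = kk V (Sub E col {Magenta, Yellow}) ends + kk V (Sub E col {Yellow, Cyan}) ends
     + kk V (Sub E col {Magenta, Cyan}) ends - 2 * kk V E ends"

lemma Sigma_Phi:
  assumes fin: "finite V"
  shows "Sigma_graph V E ends col = Phi V E ends col"
proof -
  have v: "val E ends col S C = card {D\<in>components V (Sub E col S) ends. D \<subseteq> C}"
    if "C \<in> components V E ends" for S C
  proof -
    have "{e \<in> E. col e \<in> S \<and> ends e \<subseteq> C} = {e\<in>Sub E col S. ends e \<subseteq> C}"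
      unfolding Sub_def by auto
    then show ?thesis unfolding val_def
      using comps_restrict[of "Sub E col S" E C V ends] that unfolding Sub_def by auto
  qed
  have s: "(\<Sum>C\<in>components V E ends. int (val E ends col S C)) = kk V (Sub E col S) ends" for S
  proof -
    have "(\<Sum>C\<in>components V E ends. int (val E ends col S C)) =
        int (\<Sum>C\<in>components V E ends. card {D\<in>components V (Sub E col S) ends. D \<subseteq> C})"
      using v by simp
    also have "\<dots> = kk V (Sub E col S) ends"
      unfolding kk_def using sum_restrict[OF fin, of "Sub E col S" E ends] unfolding Sub_def by simp
    finally show ?thesis .
  qed
  have "Sigma_graph V E ends col =
     (\<Sum>C\<in>components V E ends. int (val E ends col {Magenta, Yellow} C))
     + (\<Sum>C\<in>components V E ends. int (val E ends col {Yellow, Cyan} C))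
     + (\<Sum>C\<in>components V E ends. int (val E ends col {Magenta, Cyan} C))
     - (\<Sum>C\<in>components V E ends. 2)"
    unfolding Sigma_graph_def by (simp add: sum.distrib sum_subtractf)
  also have "\<dots> = Phi V E ends col"
    unfolding s Phi_def kk_def by simp
  finally show ?thesis .
qed

lemma Sub_insert: "Sub (insert e F) col S = (if col e \<in> S then insert e (Sub F col S) else Sub F col S)"
  unfolding Sub_def by auto

lemma Sub_sub: "Sub F col S \<subseteq> F" unfolding Sub_def by auto

lemma kk_step:
  assumes fin: "finite V" and e: "ends e = {u,v}" "u \<in> V" "v \<in> V"
  shows "kk V (Sub (insert e F) col S) ends = kk V (Sub F col S) ends
     - (if col e \<in> S \<and> (u,v) \<notin> (adj_rel V (Sub F col S) ends)\<^sup>* then 1 else 0)"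
  unfolding Sub_insert kk_def using kk_insert[of V ends e u v, OF fin e, of "Sub F col S"] by auto

lemma kk_step_all:
  assumes fin: "finite V" and e: "ends e = {u,v}" "u \<in> V" "v \<in> V"
  shows "kk V (insert e F) ends = kk V F ends
     - (if (u,v) \<notin> (adj_rel V F ends)\<^sup>* then 1 else 0)"
  unfolding kk_def using kk_insert[of V ends e u v, OF fin e, of F] by auto

lemma Phi_step:
  assumes fin: "finite V" and e: "ends e = {u,v}" "u \<in> V" "v \<in> V"
  defines "cn \<equiv> \<lambda>F'. (u,v) \<in> (adj_rel V F' ends)\<^sup>*"
  shows "Phi V (insert e F) ends col \<le> Phi V F ends col"
    and "cn F \<Longrightarrow> (\<exists>S\<in>{{Magenta,Yellow},{Yellow,Cyan},{Magenta,Cyan}}. col e \<in> S \<and> \<not> cn (Sub F col S))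
          \<Longrightarrow> Phi V (insert e F) ends col < Phi V F ends col"
    and "(cn F \<Longrightarrow> \<forall>S\<in>{{Magenta,Yellow},{Yellow,Cyan},{Magenta,Cyan}}. col e \<in> S \<longrightarrow> cn (Sub F col S))
          \<Longrightarrow> Phi V (insert e F) ends col = Phi V F ends col"
proof -
  have mono: "cn (Sub F col S) \<Longrightarrow> cn F" for S
    unfolding cn_def by (rule conn_mono[OF subset_refl Sub_sub])
  note k = kk_step[of V ends e u v, OF fin e, of F col] kk_step_all[of V ends e u v, OF fin e, of F]
  have m1: "cn (Sub F col {Magenta,Yellow}) \<Longrightarrow> cn F" and m2: "cn (Sub F col {Yellow,Cyan}) \<Longrightarrow> cn F"
    and m3: "cn (Sub F col {Magenta,Cyan}) \<Longrightarrow> cn F" using mono by auto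
  have P: "Phi V (insert e F) ends col = Phi V F ends col
     - (if col e \<in> {Magenta,Yellow} \<and> \<not> cn (Sub F col {Magenta,Yellow}) then 1 else 0)
     - (if col e \<in> {Yellow,Cyan} \<and> \<not> cn (Sub F col {Yellow,Cyan}) then 1 else 0)
     - (if col e \<in> {Magenta,Cyan} \<and> \<not> cn (Sub F col {Magenta,Cyan}) then 1 else 0)
     + 2 * (if \<not> cn F then 1 else 0)"
    unfolding Phi_def k cn_def by simp
  let ?MY = "cn (Sub F col {Magenta,Yellow})" and ?YC = "cn (Sub F col {Yellow,Cyan})"
    and ?MC = "cn (Sub F col {Magenta,Cyan})"
  have all: "(Phi V (insert e F) ends col \<le> Phi V F ends col) \<and>
     (cn F \<longrightarrow> (\<exists>S\<in>{{Magenta,Yellow},{Yellow,Cyan},{Magenta,Cyan}}. col e \<in> S \<and> \<not> cn (Sub F col S))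
          \<longrightarrow> Phi V (insert e F) ends col < Phi V F ends col) \<and>
     ((cn F \<longrightarrow> (\<forall>S\<in>{{Magenta,Yellow},{Yellow,Cyan},{Magenta,Cyan}}. col e \<in> S \<longrightarrow> cn (Sub F col S)))
          \<longrightarrow> Phi V (insert e F) ends col = Phi V F ends col)"
    unfolding P using m1 m2 m3
    by (cases "col e"; cases "cn F"; cases ?MY; cases ?YC; cases ?MC) simp_all
  note a1 = all[THEN conjunct1] and a2 = all[THEN conjunct2, THEN conjunct1]
    and a3 = all[THEN conjunct2, THEN conjunct2]
  show "Phi V (insert e F) ends col \<le> Phi V F ends col" by (rule a1)
  show "cn F \<Longrightarrow> (\<exists>S\<in>{{Magenta,Yellow},{Yellow,Cyan},{Magenta,Cyan}}. col e \<in> S \<and> \<not> cn (Sub F col S))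
          \<Longrightarrow> Phi V (insert e F) ends col < Phi V F ends col"
  proof -
    assume c1: "cn F" and c2: "\<exists>S\<in>{{Magenta,Yellow},{Yellow,Cyan},{Magenta,Cyan}}. col e \<in> S \<and> \<not> cn (Sub F col S)"
    show ?thesis using mp[OF mp[OF a2 c1] c2] .
  qed
  show "(cn F \<Longrightarrow> \<forall>S\<in>{{Magenta,Yellow},{Yellow,Cyan},{Magenta,Cyan}}. col e \<in> S \<longrightarrow> cn (Sub F col S))
          \<Longrightarrow> Phi V (insert e F) ends col = Phi V F ends col"
  proof -
    assume h: "cn F \<Longrightarrow> \<forall>S\<in>{{Magenta,Yellow},{Yellow,Cyan},{Magenta,Cyan}}. col e \<in> S \<longrightarrow> cn (Sub F col S)"
    have "cn F \<longrightarrow> (\<forall>S\<in>{{Magenta,Yellow},{Yellow,Cyan},{Magenta,Cyan}}. col e \<in> S \<longrightarrow> cn (Sub F col S))"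
      using h by (rule impI)
    with a3 show ?thesis by (rule mp)
  qed
qed

lemma modinj: fixes a b c m :: nat assumes "a < m" "b < m" "(c + a) mod m = (c + b) mod m" shows "a = b"
proof -
  have h: "a = b" if "b \<le> a" "(c+a) mod m = (c+b) mod m" "a<m" for a b
  proof (rule ccontr)
    assume ne: "a \<noteq> b"
    have "m dvd (c+a) - (c+b)" using mod_eq_dvd_iff_nat[of "c+b" "c+a" m] that by simp
    then have "m dvd a - b" by simp
    moreover have "a - b < m" "0 < a - b" using that ne by auto
    ultimately show False using nat_dvd_not_less by blast
  qed
  show ?thesis
  proof (cases "b \<le> a")
    case True then show ?thesis using h assms by blast
  next
    case False then show ?thesis using h[of a b] h[of b a] assms by simp
  qed
qed

definition spath :: "('e \<Rightarrow> 'a set) \<Rightarrow> 'a list \<Rightarrow> 'e list \<Rightarrow> bool" where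
  "spath ends xs es \<longleftrightarrow> length xs = Suc (length es) \<and> distinct xs \<and>
     (\<forall>i<length es. ends (es!i) = {xs!i, xs!Suc i})"

lemma path_exists:
  assumes "(u,v) \<in> (adj_rel W F ends)\<^sup>*" "u \<in> W"
  shows "\<exists>xs es. spath ends xs es \<and> hd xs = u \<and> last xs = v \<and> set xs \<subseteq> W \<and> set es \<subseteq> F"
  using assms
proof (induction rule: rtrancl_induct)
  case base
  show ?case by (rule exI[of _ "[u]"], rule exI[of _ "[]"]) (use base in \<open>auto simp: spath_def\<close>)
next
  case (step y z)
  from step.IH[OF step.prems] obtain xs es where p: "spath ends xs es" "hd xs = u" "last xs = y"
    "set xs \<subseteq> W" "set es \<subseteq> F" by blast
  from step.hyps(2) obtain g where g: "g \<in> F" "ends g = {y,z}" "z \<in> W" unfolding adj_rel_def by blast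
  have len: "length xs = Suc (length es)" and dx: "distinct xs"
    and ed: "\<forall>i<length es. ends (es!i) = {xs!i, xs!Suc i}" using p(1) unfolding spath_def by auto
  have xsne: "xs \<noteq> []" using len by auto
  show ?case
  proof (cases "z \<in> set xs")
    case True
    then obtain k where k: "k < length xs" "xs!k = z" by (metis in_set_conv_nth)
    let ?xs = "take (Suc k) xs" and ?es = "take k es"
    have "spath ends ?xs ?es" unfolding spath_def
    proof (intro conjI allI impI)
      show "length ?xs = Suc (length ?es)" using k len by simp
      show "distinct ?xs" using dx by simp
      fix i assume "i < length ?es"
      then have "i < k" "k \<le> length es" using k len by auto
      then show "ends (?es!i) = {?xs!i, ?xs!Suc i}" using ed by simp
    qed
    moreover have "hd ?xs = u" using p(2) xsne by simp
    moreover have "last ?xs = z" using k by (simp add: take_Suc_conv_app_nth)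
    moreover have "set ?xs \<subseteq> W" using p(4) set_take_subset by fastforce
    moreover have "set ?es \<subseteq> F" using p(5) set_take_subset by fastforce
    ultimately show ?thesis by blast
  next
    case False
    let ?xs = "xs @ [z]" and ?es = "es @ [g]"
    have lastx: "xs ! length es = y" using p(3) xsne len by (simp add: last_conv_nth)
    have "spath ends ?xs ?es" unfolding spath_def
    proof (intro conjI allI impI)
      show "length ?xs = Suc (length ?es)" using len by simp
      show "distinct ?xs" using dx False by simp
      fix i assume i: "i < length ?es"
      show "ends (?es!i) = {?xs!i, ?xs!Suc i}"
      proof (cases "i < length es")
        case True then show ?thesis using ed len by (simp add: nth_append)
      next
        case False then have "i = length es" using i by simp
        then show ?thesis using g(2) lastx len by (simp add: nth_append)
      qed
    qed
    moreover have "hd ?xs = u" using p(2) xsne by simp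
    moreover have "last ?xs = z" by simp
    moreover have "set ?xs \<subseteq> W" using p(4) g(3) by simp
    moreover have "set ?es \<subseteq> F" using p(5) g(1) by simp
    ultimately show ?thesis by blast
  qed
qed

lemma spath_distinct_es:
  assumes "spath ends xs es" shows "distinct es"
proof -
  have len: "length xs = Suc (length es)" and dx: "distinct xs"
    and ed: "\<forall>i<length es. ends (es!i) = {xs!i, xs!Suc i}" using assms unfolding spath_def by auto
  show ?thesis unfolding distinct_conv_nth
  proof (intro allI impI)
    fix i j assume ij: "i < length es" "j < length es" "i \<noteq> j"
    show "es!i \<noteq> es!j"
    proof
      assume "es!i = es!j"
      then have "{xs!i, xs!Suc i} = {xs!j, xs!Suc j}" using ed ij by metis
      then have "(xs!i = xs!j \<and> xs!Suc i = xs!Suc j) \<or> (xs!i = xs!Suc j \<and> xs!Suc i = xs!j)"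
        by (simp add: doubleton_eq_iff)
      then show False using dx ij len by (auto simp: nth_eq_iff_index_eq)
    qed
  qed
qed

lemma spath_conn:
  assumes "spath ends xs es" "set xs \<subseteq> W" "set es \<subseteq> F"
  shows "(hd xs, last xs) \<in> (adj_rel W F ends)\<^sup>*"
proof -
  have len: "length xs = Suc (length es)"
    and ed: "\<forall>i<length es. ends (es!i) = {xs!i, xs!Suc i}" using assms(1) unfolding spath_def by auto
  have "i < length xs \<longrightarrow> (xs!0, xs!i) \<in> (adj_rel W F ends)\<^sup>*" for i
  proof (induction i)
    case 0 show ?case by simp
  next
    case (Suc i)
    show ?case
    proof
      assume si: "Suc i < length xs"
      then have i: "i < length es" using len by simp
      have "es!i \<in> F" using assms(3) i by auto
      moreover have "xs!i \<in> W" "xs!Suc i \<in> W" using assms(2) si by auto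
      ultimately have "(xs!i, xs!Suc i) \<in> adj_rel W F ends" using ed i unfolding adj_rel_def by blast
      moreover have "(xs!0, xs!i) \<in> (adj_rel W F ends)\<^sup>*" using Suc.IH si by simp
      ultimately show "(xs!0, xs!Suc i) \<in> (adj_rel W F ends)\<^sup>*" by simp
    qed
  qed
  moreover have ne: "xs \<noteq> []" using len by auto
  moreover have "hd xs = xs!0" "last xs = xs!(length xs - 1)" using ne by (auto simp: hd_conv_nth last_conv_nth)
  ultimately show ?thesis using len by simp
qed

lemma cyc_basic:
  assumes "is_cycle V E ends xs es"
  shows "length es = length xs" "xs \<noteq> []" "distinct xs" "distinct es" "set xs \<subseteq> V" "set es \<subseteq> E"
    "\<And>i. i < length xs \<Longrightarrow> ends (es ! i) = {xs ! i, xs ! (Suc i mod length xs)}"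
  using assms unfolding is_cycle_def by auto

lemma Yinj:
  fixes m i a b :: nat
  assumes "a < m" "b < m" "(i + Suc a) mod m = (i + Suc b) mod m" shows "a = b"
proof -
  have "(Suc i + a) mod m = (Suc i + b) mod m" using assms(3) by simp
  then show ?thesis using modinj[OF assms(1,2)] by blast
qed

lemma Ysurj:
  fixes m i k :: nat
  assumes "k < m"
  shows "\<exists>t<m. (i + Suc t) mod m = k"
proof -
  let ?f = "\<lambda>t. (i + Suc t) mod m"
  have m: "0 < m" using assms by simp
  have "inj_on ?f {..<m}" unfolding inj_on_def using Yinj by blast
  moreover have "?f ` {..<m} \<subseteq> {..<m}" using m by auto
  ultimately have "?f ` {..<m} = {..<m}" using endo_inj_surj[OF finite_lessThan[of m]] by blast
  then have "k \<in> ?f ` {..<m}" using assms by simp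
  then obtain t where "t < m" "?f t = k" by auto
  then show ?thesis by blast
qed

lemma Ylast: fixes m i :: nat assumes "i < m" shows "(i + Suc (m - 1)) mod m = i"
proof -
  have "i + Suc (m - 1) = i + m" using assms by simp
  also have "(i + m) mod m = i" using assms by simp
  finally show ?thesis by simp
qed

lemma cyc_conn:
  assumes c: "is_cycle V E ends xs es" and i: "i < length xs"
  shows "(xs!(Suc i mod length xs), xs!i) \<in> (adj_rel V (set es - {es!i}) ends)\<^sup>*"
proof -
  let ?m = "length xs"
  let ?R = "adj_rel V (set es - {es!i}) ends"
  let ?Y = "\<lambda>t. xs!((i + Suc t) mod ?m)"
  note cb = cyc_basic[OF c]
  have m: "0 < ?m" using i by linarith
  have all: "t < ?m \<longrightarrow> (?Y 0, ?Y t) \<in> ?R\<^sup>*" for t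
  proof (induction t)
    case 0 show ?case by simp
  next
    case (Suc t)
    show ?case
    proof
      assume st: "Suc t < ?m"
      define k where "k = (i + Suc t) mod ?m"
      have k: "k < ?m" unfolding k_def using m by simp
      have ki: "k \<noteq> i"
      proof
        assume "k = i"
        then have "(i + Suc t) mod ?m = (i + Suc (?m - 1)) mod ?m" using Ylast[OF i] k_def by simp
        then have "t = ?m - 1" using Yinj[of t ?m "?m - 1" i] st by simp
        then show False using st by simp
      qed
      have "es!k \<noteq> es!i" using cb(1,4) k i ki by (simp add: nth_eq_iff_index_eq)
      then have ek: "es!k \<in> set es - {es!i}" using k cb(1) by simp
      have "Suc k mod ?m = (i + Suc (Suc t)) mod ?m" unfolding k_def by (simp add: mod_Suc_eq)
      then have "ends (es!k) = {?Y t, ?Y (Suc t)}" using cb(7)[OF k] k_def by simp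
      moreover have "?Y t \<in> V" "?Y (Suc t) \<in> V" using cb(5) m by auto
      ultimately have "(?Y t, ?Y (Suc t)) \<in> ?R" using ek unfolding adj_rel_def by blast
      moreover have "(?Y 0, ?Y t) \<in> ?R\<^sup>*" using Suc.IH st by simp
      ultimately show "(?Y 0, ?Y (Suc t)) \<in> ?R\<^sup>*" by simp
    qed
  qed
  have fact: "(?Y 0, ?Y (?m - 1)) \<in> ?R\<^sup>*" by (rule mp[OF all[of "?m - 1"]]) (use m in simp)
  have e1: "xs!((i + Suc (?m - 1)) mod ?m) = xs!i" using Ylast[OF i] by simp
  have e2: "xs!((i + Suc 0) mod ?m) = xs!(Suc i mod ?m)" by simp
  from fact show ?thesis unfolding e1 e2 .
qed

lemma cyc_disconn:
  assumes c: "is_cycle V E ends xs es" and i: "i < length xs" and j: "j < length xs" and ij: "i \<noteq> j"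
    and F: "F \<subseteq> set es - {es!i, es!j}"
  shows "(xs!(Suc i mod length xs), xs!i) \<notin> (adj_rel V F ends)\<^sup>*"
proof
  let ?m = "length xs"
  let ?R = "adj_rel V F ends"
  let ?Y = "\<lambda>t. xs!((i + Suc t) mod ?m)"
  note cb = cyc_basic[OF c]
  have m: "0 < ?m" using i by linarith
  have Yi: "?Y a = ?Y b \<Longrightarrow> a < ?m \<Longrightarrow> b < ?m \<Longrightarrow> a = b" for a b
  proof -
    assume h: "?Y a = ?Y b" "a < ?m" "b < ?m"
    then have "(i + Suc a) mod ?m = (i + Suc b) mod ?m" using cb(3) m by (simp add: nth_eq_iff_index_eq)
    then show "a = b" using Yinj h by blast
  qed
  obtain s0 where s0: "s0 < ?m" "(i + Suc s0) mod ?m = j" using Ysurj[OF j] by blast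
  have s0l: "s0 \<noteq> ?m - 1" using s0 Ylast[OF i] ij by auto
  define S where "S = {?Y t | t. t \<le> s0}"
  have inS: "t \<le> s0 \<Longrightarrow> ?Y t \<in> S" for t unfolding S_def by blast
  have closed: "z \<in> S" if yS: "y \<in> S" and yzR: "(y,z) \<in> ?R" for y z
  proof -
    obtain t where t: "t \<le> s0" "y = ?Y t" using yS unfolding S_def by blast
    obtain g where g: "g \<in> F" "ends g = {y,z}" using yzR unfolding adj_rel_def by blast
    have "g \<in> set es" using g F by blast
    then obtain k where k: "k < ?m" "es!k = g" using cb(1) by (metis in_set_conv_nth)
    obtain t' where t': "t' < ?m" "(i + Suc t') mod ?m = k" using Ysurj[OF k(1)] by blast
    have "k \<noteq> i" "k \<noteq> j" using k g F by auto
    then have t'1: "t' \<noteq> ?m - 1" "t' \<noteq> s0" using t' Ylast[OF i] s0 by auto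
    have "Suc k mod ?m = (i + Suc (Suc t')) mod ?m" using t'(2) by (metis mod_Suc_eq add_Suc_right)
    then have "ends g = {?Y t', ?Y (Suc t')}" using cb(7)[OF k(1)] k(2) t'(2) by simp
    then have yz: "{y,z} = {?Y t', ?Y (Suc t')}" using g by simp
    have st': "Suc t' < ?m" using t' t'1 by simp
    show "z \<in> S"
    proof (cases "y = ?Y t'")
      case True
      then have "t = t'" using Yi t t' s0 by simp
      then have "t' < s0" using t t'1 by simp
      then have a1: "?Y t' \<in> S" "?Y (Suc t') \<in> S" using inS[of t'] inS[of "Suc t'"] by auto
      have "z = ?Y t' \<or> z = ?Y (Suc t')" using yz True by (auto simp: doubleton_eq_iff)
      then show ?thesis using a1 by blast
    next
      case False
      then have "y = ?Y (Suc t')" using yz by (auto simp: doubleton_eq_iff)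
      then have "t = Suc t'" using Yi t st' s0 by simp
      then have "z = ?Y t' \<and> t' \<le> s0 \<or> z = ?Y (Suc t') \<and> Suc t' \<le> s0" using yz False t
        by (auto simp: doubleton_eq_iff)
      then show ?thesis unfolding S_def by blast
    qed
  qed
  have reach: "(a,b) \<in> ?R\<^sup>* \<Longrightarrow> a \<in> S \<Longrightarrow> b \<in> S" for a b
    by (induction rule: rtrancl_induct) (auto intro: closed)
  assume "(xs!(Suc i mod ?m), xs!i) \<in> ?R\<^sup>*"
  moreover have "xs!(Suc i mod ?m) \<in> S" using inS[of 0] by simp
  ultimately have "xs!i \<in> S" using reach by blast
  then obtain t where t: "t \<le> s0" "xs!i = ?Y t" unfolding S_def by blast
  have "?Y (?m - 1) = ?Y t" using t Ylast[OF i] by simp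
  then have "?m - 1 = t" using Yi t s0 m by simp
  then show False using t s0 s0l by simp
qed

lemma Phi_empty: "Phi V {} ends col = int (card V)"
proof -
  have "Sub {} col S = {}" for S unfolding Sub_def by simp
  then show ?thesis unfolding Phi_def kk_def using kk_empty[of V ends] by simp
qed

lemma cm_edge:
  assumes "coloured_multigraph V E ends col" "e \<in> E"
  shows "\<exists>u v. ends e = {u,v} \<and> u \<in> V \<and> v \<in> V \<and> u \<noteq> v"
proof -
  have "ends e \<subseteq> V" "card (ends e) = 2" using assms unfolding coloured_multigraph_def by auto
  then show ?thesis by (metis card_2_iff insert_subset)
qed

lemma Phi_mono:
  assumes cm: "coloured_multigraph V E ends col" and FE: "F \<subseteq> E" and DE: "D \<subseteq> E"
  shows "Phi V (F \<union> D) ends col \<le> Phi V F ends col"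
proof -
  have finV: "finite V" and finE: "finite E" using cm unfolding coloured_multigraph_def by auto
  have "finite D" using finE DE by (rule rev_finite_subset)
  then show ?thesis using DE
  proof (induction D rule: finite_subset_induct)
    case empty then show ?case by simp
  next
    case (insert a D)
    show ?case
    proof (cases "a \<in> F")
      case True
      then have "F \<union> insert a D = F \<union> D" by blast
      then show ?thesis using insert.IH by simp
    next
      case False
      obtain u v where uv: "ends a = {u,v}" "u \<in> V" "v \<in> V" using cm_edge[OF cm insert.hyps(2)] by blast
      have "F \<union> insert a D = insert a (F \<union> D)" by blast
      moreover have "Phi V (insert a (F \<union> D)) ends col \<le> Phi V (F \<union> D) ends col"
        by (rule Phi_step(1)[where V=V and ends=ends and e=a and u=u and v=v, OF finV uv])
      ultimately show ?thesis using insert.IH by simp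
    qed
  qed
qed

lemma Phi_le:
  assumes cm: "coloured_multigraph V E ends col" and FE: "F \<subseteq> E"
  shows "Phi V F ends col \<le> int (card V)"
  using Phi_mono[OF cm empty_subsetI FE] Phi_empty[of V ends col] by simp

lemma mono_imp_eq:
  assumes cm: "coloured_multigraph V E ends col"
    and mono: "\<forall>xs es. is_cycle V E ends xs es \<longrightarrow> monochromatic col es"
    and FE: "F \<subseteq> E"
  shows "Phi V F ends col = int (card V)"
proof -
  have finV: "finite V" and finE: "finite E" using cm unfolding coloured_multigraph_def by auto
  have "finite F" using finE FE by (rule rev_finite_subset)
  then show ?thesis using FE
  proof (induction F rule: finite_subset_induct')
    case empty then show ?case by (rule Phi_empty)
  next
    case (insert a F)
    obtain u v where uv: "ends a = {u,v}" "u \<in> V" "v \<in> V" using cm_edge[OF cm insert.hyps(2)] by blast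
    have FE': "F \<subseteq> E" by (rule insert.hyps(3))
    have "Phi V (insert a F) ends col = Phi V F ends col"
    proof (rule Phi_step(3)[where V=V and ends=ends and e=a and u=u and v=v, OF finV uv])
      assume conn: "(u,v) \<in> (adj_rel V F ends)\<^sup>*"
      obtain xs es where p: "spath ends xs es" "hd xs = u" "last xs = v" "set xs \<subseteq> V" "set es \<subseteq> F"
        using path_exists[OF conn uv(2)] by blast
      have len: "length xs = Suc (length es)" and dx: "distinct xs"
        and ed: "\<forall>i<length es. ends (es!i) = {xs!i, xs!Suc i}" using p(1) unfolding spath_def by auto
      have xsne: "xs \<noteq> []" using len by auto
      have cyc: "is_cycle V E ends xs (es @ [a])" unfolding is_cycle_def
      proof (intro conjI allI impI)
        show "length xs = length (es @ [a])" using len by simp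
        show "xs \<noteq> []" by (rule xsne)
        show "distinct xs" by (rule dx)
        show "distinct (es @ [a])" using spath_distinct_es[OF p(1)] p(5) insert.hyps(4) by auto
        show "set xs \<subseteq> V" by (rule p(4))
        show "set (es @ [a]) \<subseteq> E" using p(5) FE' insert.hyps(2) by auto
        fix i assume i: "i < length (es @ [a])"
        show "ends ((es @ [a]) ! i) = {xs ! i, xs ! ((i + 1) mod length xs)}"
        proof (cases "i < length es")
          case True
          then have "(i + 1) mod length xs = Suc i" using len by simp
          then show ?thesis using True ed by (simp add: nth_append)
        next
          case False
          then have ii: "i = length es" using i by simp
          have "(i + 1) mod length xs = 0" using ii len by simp
          moreover have "xs ! length es = v" using p(3) xsne len by (simp add: last_conv_nth)
          moreover have "xs ! 0 = u" using p(2) xsne by (simp add: hd_conv_nth)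
          moreover have "(es @ [a]) ! i = a" using ii by simp
          ultimately show ?thesis using uv(1) ii by auto
        qed
      qed
      have "monochromatic col (es @ [a])" using mono[rule_format, OF cyc] .
      then have mc: "\<forall>e\<in>set (es @ [a]). \<forall>e'\<in>set (es @ [a]). col e = col e'" unfolding monochromatic_def .
      have colf: "\<forall>f\<in>set es. col f = col a"
      proof
        fix f assume "f \<in> set es"
        then have "f \<in> set (es @ [a])" "a \<in> set (es @ [a])" by auto
        then show "col f = col a" using mc by blast
      qed
      show "\<forall>S\<in>{{Magenta,Yellow},{Yellow,Cyan},{Magenta,Cyan}}. col a \<in> S \<longrightarrow> (u,v) \<in> (adj_rel V (Sub F col S) ends)\<^sup>*"
      proof (intro ballI impI)
        fix S assume S1: "S \<in> {{Magenta,Yellow},{Yellow,Cyan},{Magenta,Cyan}}" and S2: "col a \<in> S"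
        have "set es \<subseteq> Sub F col S"
        proof
          fix f assume f: "f \<in> set es"
          then have "col f = col a" "f \<in> F" using colf p(5) by auto
          then show "f \<in> Sub F col S" using S2 unfolding Sub_def by simp
        qed
        then have "(hd xs, last xs) \<in> (adj_rel V (Sub F col S) ends)\<^sup>*"
          by (rule spath_conn[OF p(1) p(4)])
        then show "(u,v) \<in> (adj_rel V (Sub F col S) ends)\<^sup>*" unfolding p(2,3) .
      qed
    qed
    then show ?case using insert.IH FE' by simp
  qed
qed

lemma eq_imp_mono:
  assumes cm: "coloured_multigraph V E ends col"
    and eq: "Phi V E ends col = int (card V)"
    and c: "is_cycle V E ends xs es"
  shows "monochromatic col es"
proof (rule ccontr)
  assume "\<not> monochromatic col es"
  then obtain f g where fg: "f \<in> set es" "g \<in> set es" "col f \<noteq> col g" unfolding monochromatic_def by blast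
  note cb = cyc_basic[OF c]
  have finV: "finite V" using cm unfolding coloured_multigraph_def by auto
  obtain i where i: "i < length xs" "es!i = f" using fg(1) cb(1) by (metis in_set_conv_nth)
  obtain j where j: "j < length xs" "es!j = g" using fg(2) cb(1) by (metis in_set_conv_nth)
  have ij: "i \<noteq> j" using i j fg(3) by auto
  define u where "u = xs!i"
  define v where "v = xs!(Suc i mod length xs)"
  have m: "0 < length xs" using i(1) by linarith
  have uv1: "ends f = {u,v}" using cb(7)[OF i(1)] i(2) unfolding u_def v_def by simp
  have "Suc i mod length xs < length xs" using m by (rule mod_less_divisor)
  then have uv2: "u \<in> V" "v \<in> V" using cb(5) i(1) unfolding u_def v_def by (auto intro: nth_mem)
  note uv = uv1 uv2
  define F where "F = set es - {f}"
  have ins: "insert f F = set es" unfolding F_def using fg(1) by blast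
  have esE: "set es \<subseteq> E" by (rule cb(6))
  have FE: "F \<subseteq> E" unfolding F_def using esE by blast
  have "Phi V E ends col \<le> Phi V (set es) ends col"
    using Phi_mono[OF cm esE subset_refl] esE by (simp add: Un_absorb1)
  then have p1: "Phi V (set es) ends col = int (card V)" using Phi_le[OF cm esE] eq by simp
  have p2: "Phi V F ends col \<le> int (card V)" using Phi_le[OF cm FE] .
  have cn: "(u,v) \<in> (adj_rel V F ends)\<^sup>*"
    using conn_sym[OF cyc_conn[OF c i(1)]] i(2) unfolding F_def u_def v_def by simp
  obtain S where S: "S \<in> {{Magenta,Yellow},{Yellow,Cyan},{Magenta,Cyan}}" "col f \<in> S" "col g \<notin> S"
  proof -
    have "\<exists>S\<in>{{Magenta,Yellow},{Yellow,Cyan},{Magenta,Cyan}}. col f \<in> S \<and> col g \<notin> S"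
      using fg(3) by (cases "col f"; cases "col g") auto
    then show ?thesis using that by blast
  qed
  have "Sub F col S \<subseteq> set es - {es!i, es!j}" using S(3) i(2) j(2) unfolding Sub_def F_def by auto
  then have nc0: "(xs!(Suc i mod length xs), xs!i) \<notin> (adj_rel V (Sub F col S) ends)\<^sup>*"
    by (rule cyc_disconn[OF c i(1) j(1) ij])
  have nc: "(u,v) \<notin> (adj_rel V (Sub F col S) ends)\<^sup>*"
  proof
    assume "(u,v) \<in> (adj_rel V (Sub F col S) ends)\<^sup>*"
    then have "(v,u) \<in> (adj_rel V (Sub F col S) ends)\<^sup>*" by (rule conn_sym)
    then show False using nc0 unfolding u_def v_def by simp
  qed
  have ex: "\<exists>S\<in>{{Magenta,Yellow},{Yellow,Cyan},{Magenta,Cyan}}. col f \<in> S \<and> (u,v) \<notin> (adj_rel V (Sub F col S) ends)\<^sup>*"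
    by (rule bexI[of _ S]) (use S(1) S(2) nc in simp_all)
  have "Phi V (insert f F) ends col < Phi V F ends col"
    by (rule Phi_step(2)[where V=V and ends=ends and e=f and u=u and v=v and F=F and col=col, OF finV uv cn ex])
  then have "Phi V (set es) ends col < Phi V F ends col" unfolding ins .
  then show False using p1 p2 by linarith
qed

theorem proposition5p1:
  fixes V :: "'a set" and E :: "'e set" and ends :: "'e \<Rightarrow> 'a set"
    and col :: "'e \<Rightarrow> colour" and n :: nat
  assumes "n \<ge> 1" and "card V = n"
    and "coloured_multigraph V E ends col"
  shows "Sigma_graph V E ends col \<le> int n \<and>
         (Sigma_graph V E ends col = int n \<longleftrightarrow>
            (\<forall>xs es. is_cycle V E ends xs es \<longrightarrow> monochromatic col es))"
proof -
  have finV: "finite V" using assms(3) unfolding coloured_multigraph_def by auto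
  have S: "Sigma_graph V E ends col = Phi V E ends col" by (rule Sigma_Phi[OF finV])
  show ?thesis
  proof (intro conjI iffI allI impI)
    show "Sigma_graph V E ends col \<le> int n" using S Phi_le[OF assms(3) subset_refl] assms(2) by simp
  next
    fix xs es assume "Sigma_graph V E ends col = int n" "is_cycle V E ends xs es"
    then have "Phi V E ends col = int (card V)" "is_cycle V E ends xs es" using S assms(2) by simp_all
    then show "monochromatic col es" by (rule eq_imp_mono[OF assms(3)])
  next
    assume "\<forall>xs es. is_cycle V E ends xs es \<longrightarrow> monochromatic col es"
    then have "Phi V E ends col = int (card V)" by (rule mono_imp_eq[OF assms(3) _ subset_refl])
    then show "Sigma_graph V E ends col = int n" using S assms(2) by simp
  qed
qed

end
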